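(* There exist absolute constants $c_1,c_2,C_0>0$ such that the following holds. Suppose $w$ is normalized so that $\sum_{i=1}^n\log w_i=0$, and suppose $\delta\le e^{-1}$, $C_{n,\delta}\ge c_1\log(n/\delta)$, and $k\ge c_2\, b\,(C_{n,\delta}+1)\max\{\Omega_{\max},E_{\max}\}$. Then with probability at least $1-\delta$, for all pairs $i,j\in\{1,\dots,n\}$, $$\left(\log\frac{\widehat W_i}{\widehat W_j}-\log\frac{w_i}{w_j}\right)^2\le 2\|V(F-p)\|_{(i,j)}^2+2\|\Delta\|_{(i,j)}^2,$$ and $\|\Delta\|_\infty\le C_0\, b\,C_{n,\delta}/k$.
   Context: $G=(V,E)$ is an undirected connected graph on $V=\{1,\dots,n\}$, each edge with a fixed orientation $(i,j)$; $B\in\mathbb{R}^{n\times|E|}$ is the incidence matrix (column of edge $(i,j)$ has $+1$ in row $i$, $-1$ in row $j$), $L=BB^T$, $L^\dagger$ its Moore–Penrose pseudoinverse. Weights $w$ are positive with $b\ge\max_{i,j}w_i/w_j$. For each edge $(i,j)$, $k$ independent comparisons are made, $i$ winning each with probability $p_{ij}=w_i/(w_i+w_j)$ (independent across edges); $F_{ij}$ is the fraction won by $i$, $F_{ji}=1-F_{ij}$, $R_{ij}=F_{ij}/F_{ji}$, $\rho_{ij}=w_i/w_j$, $v_{ij}=\rho_{ij}+2+\rho_{ij}^{-1}$; $F,p,R,\rho\in\mathbb{R}^{|E|}$ stack these over edges, $V=\mathrm{diag}(v_{ij})$. The estimator is $\log\widehat W=L^\dagger B\log R$. $\Delta:=\log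 R-\log\rho-V(F-p)$. For $Q_{ij}=(e_i-e_j)(e_i-e_j)^T$ and $x\in\mathbb{R}^{|E|}$, $\|x\|_{(i,j)}^2=x^TB^TL^\dagger Q_{ij}L^\dagger Bx$. $\Omega_{\max}$ is the maximal effective resistance $(e_i-e_j)^TL^\dagger(e_i-e_j)$, $E_{\max}=\max_{i,j}|E_{ij}|$ with $E_{ij}$ the set of edges on at least one simple path from $i$ to $j$. $C_{n,\delta}$ is a parameter. *)

theory Defs
  imports "HOL-Probability.Probability"
begin

definition verts :: "nat \<Rightarrow> nat set" where
  "verts n = {1..n}"

(* E is an oriented simple graph on {1..n}: each undirected edge appears with exactly one orientation *)
definition oriented_graph :: "nat \<Rightarrow> (nat \<times> nat) set \<Rightarrow> bool" where
  "oriented_graph n E \<longleftrightarrow> finite E \<and>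
     (\<forall>(i,j)\<in>E. i \<in> verts n \<and> j \<in> verts n \<and> i \<noteq> j \<and> (j,i) \<notin> E)"

definition adj :: "(nat \<times> nat) set \<Rightarrow> nat \<Rightarrow> nat \<Rightarrow> bool" where
  "adj E u v \<longleftrightarrow> (u,v) \<in> E \<or> (v,u) \<in> E"

definition connected_graph :: "nat \<Rightarrow> (nat \<times> nat) set \<Rightarrow> bool" where
  "connected_graph n E \<longleftrightarrow>
     (\<forall>u\<in>verts n. \<forall>v\<in>verts n. (u,v) \<in> {(x,y). adj E x y}\<^sup>*)"

definition incidence :: "(nat \<times> nat) set \<Rightarrow> nat \<Rightarrow> nat \<times> nat \<Rightarrow> real" where
  "incidence E v e = (if e \<in> E then (if v = fst e then 1 else if v = snd e then -1 else 0) else 0)"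

definition laplacian :: "nat \<Rightarrow> (nat \<times> nat) set \<Rightarrow> nat \<Rightarrow> nat \<Rightarrow> real" where
  "laplacian n E u v = (\<Sum>e\<in>E. incidence E u e * incidence E v e)"

definition matmul :: "'a set \<Rightarrow> ('a \<Rightarrow> 'a \<Rightarrow> real) \<Rightarrow> ('a \<Rightarrow> 'a \<Rightarrow> real) \<Rightarrow> 'a \<Rightarrow> 'a \<Rightarrow> real" where
  "matmul S A C = (\<lambda>i j. \<Sum>k\<in>S. A i k * C k j)"

(* the four Moore--Penrose conditions for a square matrix indexed by S *)
definition is_pinv :: "'a set \<Rightarrow> ('a \<Rightarrow> 'a \<Rightarrow> real) \<Rightarrow> ('a \<Rightarrow> 'a \<Rightarrow> real) \<Rightarrow> bool" where
  "is_pinv S A X \<longleftrightarrow>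
     (\<forall>i j. i \<notin> S \<or> j \<notin> S \<longrightarrow> X i j = 0) \<and>
     (\<forall>i\<in>S. \<forall>j\<in>S. matmul S (matmul S A X) A i j = A i j) \<and>
     (\<forall>i\<in>S. \<forall>j\<in>S. matmul S (matmul S X A) X i j = X i j) \<and>
     (\<forall>i\<in>S. \<forall>j\<in>S. matmul S A X i j = matmul S A X j i) \<and>
     (\<forall>i\<in>S. \<forall>j\<in>S. matmul S X A i j = matmul S X A j i)"

definition pinv :: "'a set \<Rightarrow> ('a \<Rightarrow> 'a \<Rightarrow> real) \<Rightarrow> 'a \<Rightarrow> 'a \<Rightarrow> real" where
  "pinv S A = (THE X. is_pinv S A X)"

definition Lpinv :: "nat \<Rightarrow> (nat \<times> nat) set \<Rightarrow> nat \<Rightarrow> nat \<Rightarrow> real" where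
  "Lpinv n E = pinv (verts n) (laplacian n E)"

definition Bmul :: "(nat \<times> nat) set \<Rightarrow> (nat \<times> nat \<Rightarrow> real) \<Rightarrow> nat \<Rightarrow> real" where
  "Bmul E x v = (\<Sum>e\<in>E. incidence E v e * x e)"

definition log_What :: "nat \<Rightarrow> (nat \<times> nat) set \<Rightarrow> (nat \<times> nat \<Rightarrow> real) \<Rightarrow> nat \<Rightarrow> real" where
  "log_What n E logR i = (\<Sum>v\<in>verts n. Lpinv n E i v * Bmul E logR v)"

definition unitdiff :: "nat \<Rightarrow> nat \<Rightarrow> nat \<Rightarrow> real" where
  "unitdiff i j a = (if a = i then 1 else 0) - (if a = j then 1 else 0)"

definition Qmat :: "nat \<Rightarrow> nat \<Rightarrow> nat \<Rightarrow> nat \<Rightarrow> real" where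
  "Qmat i j a c = unitdiff i j a * unitdiff i j c"

(* ||x||_(i,j)^2 = x^T B^T L^+ Q_ij L^+ B x *)
definition sqnorm_ij :: "nat \<Rightarrow> (nat \<times> nat) set \<Rightarrow> nat \<Rightarrow> nat \<Rightarrow> (nat \<times> nat \<Rightarrow> real) \<Rightarrow> real" where
  "sqnorm_ij n E i j x =
     (let Bx = Bmul E x;
          z = (\<lambda>a. \<Sum>c\<in>verts n. Bx c * Lpinv n E c a);
          y = (\<lambda>a. \<Sum>c\<in>verts n. Lpinv n E a c * Bx c)
      in \<Sum>a\<in>verts n. \<Sum>c\<in>verts n. z a * Qmat i j a c * y c)"

definition eff_res :: "nat \<Rightarrow> (nat \<times> nat) set \<Rightarrow> nat \<Rightarrow> nat \<Rightarrow> real" where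
  "eff_res n E i j = (\<Sum>a\<in>verts n. \<Sum>c\<in>verts n. unitdiff i j a * Lpinv n E a c * unitdiff i j c)"

definition Omega_max :: "nat \<Rightarrow> (nat \<times> nat) set \<Rightarrow> real" where
  "Omega_max n E = Max {eff_res n E i j | i j. i \<in> verts n \<and> j \<in> verts n}"

definition simple_path :: "(nat \<times> nat) set \<Rightarrow> nat \<Rightarrow> nat \<Rightarrow> nat list \<Rightarrow> bool" where
  "simple_path E i j ps \<longleftrightarrow> ps \<noteq> [] \<and> hd ps = i \<and> last ps = j \<and> distinct ps \<and>
     (\<forall>m. Suc m < length ps \<longrightarrow> adj E (ps ! m) (ps ! Suc m))"

definition edge_on_path :: "nat \<times> nat \<Rightarrow> nat list \<Rightarrow> bool" where
  "edge_on_path e ps \<longleftrightarrow> (\<exists>m. Suc m < length ps \<and>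
     ((ps ! m, ps ! Suc m) = e \<or> (ps ! Suc m, ps ! m) = e))"

definition path_edges :: "(nat \<times> nat) set \<Rightarrow> nat \<Rightarrow> nat \<Rightarrow> (nat \<times> nat) set" where
  "path_edges E i j = {e \<in> E. \<exists>ps. simple_path E i j ps \<and> edge_on_path e ps}"

definition E_max :: "nat \<Rightarrow> (nat \<times> nat) set \<Rightarrow> nat" where
  "E_max n E = Max {card (path_edges E i j) | i j. i \<in> verts n \<and> j \<in> verts n}"

definition pe :: "(nat \<Rightarrow> real) \<Rightarrow> nat \<times> nat \<Rightarrow> real" where
  "pe w e = w (fst e) / (w (fst e) + w (snd e))"

definition rho :: "(nat \<Rightarrow> real) \<Rightarrow> nat \<times> nat \<Rightarrow> real" where
  "rho w e = w (fst e) / w (snd e)"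

definition vv :: "(nat \<Rightarrow> real) \<Rightarrow> nat \<times> nat \<Rightarrow> real" where
  "vv w e = rho w e + 2 + 1 / rho w e"

(* X e = number of the k comparisons on edge e won by fst e *)
definition Fr :: "nat \<Rightarrow> (nat \<times> nat \<Rightarrow> nat) \<Rightarrow> nat \<times> nat \<Rightarrow> real" where
  "Fr k X e = real (X e) / real k"

definition Rr :: "nat \<Rightarrow> (nat \<times> nat \<Rightarrow> nat) \<Rightarrow> nat \<times> nat \<Rightarrow> real" where
  "Rr k X e = Fr k X e / (1 - Fr k X e)"

definition VFp :: "(nat \<Rightarrow> real) \<Rightarrow> nat \<Rightarrow> (nat \<times> nat \<Rightarrow> nat) \<Rightarrow> nat \<times> nat \<Rightarrow> real" where
  "VFp w k X e = vv w e * (Fr k X e - pe w e)"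

definition Delta :: "(nat \<Rightarrow> real) \<Rightarrow> nat \<Rightarrow> (nat \<times> nat \<Rightarrow> nat) \<Rightarrow> nat \<times> nat \<Rightarrow> real" where
  "Delta w k X e = ln (Rr k X e) - ln (rho w e) - VFp w k X e"

definition outcomes :: "(nat \<times> nat) set \<Rightarrow> (nat \<Rightarrow> real) \<Rightarrow> nat \<Rightarrow> (nat \<times> nat \<Rightarrow> nat) pmf" where
  "outcomes E w k = Pi_pmf E 0 (\<lambda>e. binomial_pmf k (pe w e))"

end

theory Submission
  imports Defs "Jordan_Normal_Form.Determinant"
begin

definition supp :: "'a set \<Rightarrow> ('a \<Rightarrow> 'a \<Rightarrow> real) \<Rightarrow> bool" where
  "supp S A \<longleftrightarrow> (\<forall>i j. i \<notin> S \<or> j \<notin> S \<longrightarrow> A i j = 0)"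

definition trm :: "('a \<Rightarrow> 'a \<Rightarrow> real) \<Rightarrow> 'a \<Rightarrow> 'a \<Rightarrow> real" where
  "trm A = (\<lambda>i j. A j i)"

lemma trm_trm[simp]: "trm (trm A) = A" by (simp add: trm_def)

lemma matmul_assoc:
  assumes "finite S"
  shows "matmul S (matmul S A B) C = matmul S A (matmul S B C)"
proof (intro ext)
  fix i j
  have "matmul S (matmul S A B) C i j = (\<Sum>k\<in>S. \<Sum>l\<in>S. A i l * B l k * C k j)"
    by (simp add: matmul_def sum_distrib_right)
  also have "\<dots> = (\<Sum>l\<in>S. \<Sum>k\<in>S. A i l * B l k * C k j)" by (rule sum.swap)
  also have "\<dots> = matmul S A (matmul S B C) i j"
    by (simp add: matmul_def sum_distrib_left mult.assoc)
  finally show "matmul S (matmul S A B) C i j = matmul S A (matmul S B C) i j" .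
qed

lemma matmul_trm: "trm (matmul S A B) = matmul S (trm B) (trm A)"
  by (auto simp: trm_def matmul_def mult.commute intro!: ext)

lemma supp_matmul: "supp S A \<Longrightarrow> supp S B \<Longrightarrow> supp S (matmul S A B)"
  by (auto simp: supp_def matmul_def)

lemma supp_trm: "supp S A \<Longrightarrow> supp S (trm A)"
  by (auto simp: supp_def trm_def)

lemma supp_eq: "supp S A \<Longrightarrow> supp S B \<Longrightarrow> (\<forall>i\<in>S. \<forall>j\<in>S. A i j = B i j) \<Longrightarrow> A = B"
  by (auto simp: supp_def intro!: ext) (metis)

lemma pinv_full:
  assumes "is_pinv S A X" "supp S A"
  shows "supp S X" "matmul S (matmul S A X) A = A" "matmul S (matmul S X A) X = X"
    "trm (matmul S A X) = matmul S A X" "trm (matmul S X A) = matmul S X A"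
proof -
  show sx: "supp S X" using assms(1) by (simp add: is_pinv_def supp_def)
  show "matmul S (matmul S A X) A = A"
    by (rule supp_eq) (use assms sx in \<open>auto simp: is_pinv_def intro!: supp_matmul\<close>)
  show "matmul S (matmul S X A) X = X"
    by (rule supp_eq) (use assms sx in \<open>auto simp: is_pinv_def intro!: supp_matmul\<close>)
  have s1: "supp S (matmul S A X)" "supp S (matmul S X A)" using assms(2) sx by (auto intro: supp_matmul)
  show "trm (matmul S A X) = matmul S A X"
    by (rule supp_eq[OF supp_trm[OF s1(1)] s1(1)]) (use assms(1) in \<open>simp add: is_pinv_def trm_def\<close>)
  show "trm (matmul S X A) = matmul S X A"
    by (rule supp_eq[OF supp_trm[OF s1(2)] s1(2)]) (use assms(1) in \<open>simp add: is_pinv_def trm_def\<close>)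
qed

lemma pinv_unique:
  assumes fin: "finite S" and sA: "supp S A" and X: "is_pinv S A X" and Y: "is_pinv S A Y"
  shows "X = Y"
proof -
  let ?m = "matmul S"
  note x = pinv_full[OF X sA] and y = pinv_full[OF Y sA]
  note as = matmul_assoc[OF fin]
  have "trm A = trm (?m (?m A Y) A)" using y(2) by simp
  also have "\<dots> = ?m (trm A) (?m (trm Y) (trm A))" by (simp add: matmul_trm)
  finally have tA: "trm A = ?m (?m (trm A) (trm Y)) (trm A)" by (simp add: as)
  have "trm A = trm (?m (?m A X) A)" using x(2) by simp
  also have "\<dots> = ?m (trm A) (?m (trm X) (trm A))" by (simp add: matmul_trm)
  finally have tA2: "trm A = ?m (?m (trm A) (trm X)) (trm A)" by (simp add: as)
  have "X = ?m X (?m A X)" using x(3) by (simp add: as)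
  also have "\<dots> = ?m X (?m (trm X) (trm A))" by (metis x(4) matmul_trm)
  also have "\<dots> = ?m X (?m (trm X) (?m (?m (trm A) (trm Y)) (trm A)))" using tA by simp
  also have "\<dots> = ?m X (?m (?m (trm X) (trm A)) (?m (trm Y) (trm A)))" by (simp add: as)
  also have "\<dots> = ?m X (?m (?m A X) (?m A Y))" by (metis x(4) y(4) matmul_trm)
  also have "\<dots> = ?m X (?m A Y)" using x(3) by (metis as)
  finally have 1: "X = ?m X (?m A Y)" .
  have "Y = ?m (?m Y A) Y" using y(3) by simp
  also have "\<dots> = ?m (?m (trm A) (trm Y)) Y" by (metis y(5) matmul_trm)
  also have "\<dots> = ?m (?m (?m (?m (trm A) (trm X)) (trm A)) (trm Y)) Y"
    using tA2 by simp
  also have "\<dots> = ?m (?m (?m (trm A) (trm X)) (?m (trm A) (trm Y))) Y" by (simp add: as)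
  also have "\<dots> = ?m (?m (?m X A) (?m Y A)) Y" by (metis x(5) y(5) matmul_trm)
  also have "\<dots> = ?m X (?m A Y)" using y(3) by (metis as)
  finally show ?thesis using 1 by simp
qed


lemma sum_unitdiff: "finite S \<Longrightarrow> i \<in> S \<Longrightarrow> j \<in> S \<Longrightarrow>
  (\<Sum>v\<in>S. unitdiff i j v * x v) = x i - x j"
proof -
  assume a: "finite S" "i \<in> S" "j \<in> S"
  have "\<And>v. unitdiff i j v * x v = (if v = i then x i else 0) - (if v = j then x j else 0)"
    by (simp add: unitdiff_def)
  then show ?thesis using a by (simp add: sum_subtractf)
qed

lemma og_edge: "oriented_graph n E \<Longrightarrow> e \<in> E \<Longrightarrow> fst e \<in> verts n \<and> snd e \<in> verts n \<and> fst e \<noteq> snd e"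
  by (auto simp: oriented_graph_def)

lemma og_finite: "oriented_graph n E \<Longrightarrow> finite E"
  by (auto simp: oriented_graph_def)

lemma inc_edge: "oriented_graph n E \<Longrightarrow> e \<in> E \<Longrightarrow> incidence E v e = unitdiff (fst e) (snd e) v"
  using og_edge[of n E e] by (auto simp: incidence_def unitdiff_def)

lemma inc_out: "oriented_graph n E \<Longrightarrow> v \<notin> verts n \<Longrightarrow> incidence E v e = 0"
  using og_edge[of n E e] by (auto simp: incidence_def)

lemma sum_inc: "oriented_graph n E \<Longrightarrow> e \<in> E \<Longrightarrow>
  (\<Sum>v\<in>verts n. incidence E v e * x v) = x (fst e) - x (snd e)"
  using og_edge[of n E e] by (simp add: inc_edge sum_unitdiff verts_def)

lemma supp_L: "oriented_graph n E \<Longrightarrow> supp (verts n) (laplacian n E)"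
  by (auto simp: supp_def laplacian_def inc_out)

lemma trm_L: "trm (laplacian n E) = laplacian n E"
  by (auto simp: trm_def laplacian_def mult.commute intro!: ext)

lemma L_mulvec: "oriented_graph n E \<Longrightarrow>
  (\<Sum>u\<in>verts n. laplacian n E v u * x u) = (\<Sum>e\<in>E. incidence E v e * (x (fst e) - x (snd e)))"
proof -
  assume og: "oriented_graph n E"
  have "(\<Sum>u\<in>verts n. laplacian n E v u * x u) = (\<Sum>e\<in>E. \<Sum>u\<in>verts n. incidence E v e * (incidence E u e * x u))"
    by (simp add: laplacian_def sum_distrib_right mult.assoc sum.swap[of _ E])
  also have "\<dots> = (\<Sum>e\<in>E. incidence E v e * (x (fst e) - x (snd e)))"
    by (rule sum.cong) (simp_all add: sum_distrib_left[symmetric] sum_inc[OF og])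
  finally show ?thesis .
qed

lemma L_rowsum: "oriented_graph n E \<Longrightarrow> (\<Sum>u\<in>verts n. laplacian n E v u) = 0"
  using L_mulvec[of n E v "\<lambda>_. 1"] by simp

lemma L_quad: "oriented_graph n E \<Longrightarrow>
  (\<Sum>v\<in>verts n. x v * (\<Sum>u\<in>verts n. laplacian n E v u * x u)) = (\<Sum>e\<in>E. (x (fst e) - x (snd e))\<^sup>2)"
proof -
  assume og: "oriented_graph n E"
  have "(\<Sum>v\<in>verts n. x v * (\<Sum>u\<in>verts n. laplacian n E v u * x u))
     = (\<Sum>v\<in>verts n. \<Sum>e\<in>E. (incidence E v e * x v) * (x (fst e) - x (snd e)))"
    by (simp only: L_mulvec[OF og]) (simp add: sum_distrib_left mult_ac)
  also have "\<dots> = (\<Sum>e\<in>E. \<Sum>v\<in>verts n. (incidence E v e * x v) * (x (fst e) - x (snd e)))"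
    by (rule sum.swap)
  also have "\<dots> = (\<Sum>e\<in>E. (x (fst e) - x (snd e))\<^sup>2)"
    by (rule sum.cong) (simp_all add: sum_distrib_right[symmetric] sum_inc[OF og] power2_eq_square)
  finally show ?thesis .
qed

lemma edges_equal_const:
  assumes cg: "connected_graph n E" and eq: "\<forall>e\<in>E. x (fst e) = x (snd e)"
    and i: "i \<in> verts n" and j: "j \<in> verts n"
  shows "x i = x j"
proof -
  have "(i, j) \<in> {(a,b). adj E a b}\<^sup>*" using cg i j by (auto simp: connected_graph_def)
  then show ?thesis
  proof (induction rule: rtrancl_induct)
    case base then show ?case by simp
  next
    case (step y z)
    then have "adj E y z" by simp
    then have "x y = x z" using eq unfolding adj_def by force
    then show ?case using step by simp
  qed
qed

lemma L_kernel_const: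
  assumes og: "oriented_graph n E" and cg: "connected_graph n E"
    and h: "\<forall>v\<in>verts n. (\<Sum>u\<in>verts n. laplacian n E v u * x u) = 0"
    and i: "i \<in> verts n" and j: "j \<in> verts n"
  shows "x i = x j"
proof -
  have "(\<Sum>e\<in>E. (x (fst e) - x (snd e))\<^sup>2) = 0"
    using L_quad[OF og, of x] h by simp
  then have "\<forall>e\<in>E. (x (fst e) - x (snd e))\<^sup>2 = 0"
    using og_finite[OF og] by (subst (asm) sum_nonneg_eq_0_iff) auto
  then have "\<forall>e\<in>E. x (fst e) = x (snd e)" by simp
  then show ?thesis using edges_equal_const[OF cg _ i j] by blast
qed


lemma sum_shift1: "(\<Sum>k\<in>{1..n}. f k) = (\<Sum>k<n. f (Suc k))"
  by (induct n) (auto simp: atLeastAtMostSuc_conv add.commute)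

lemma inv_exists:
  fixes M :: "nat \<Rightarrow> nat \<Rightarrow> real"
  assumes inj: "\<And>x. \<forall>i\<in>{1..n}. (\<Sum>k\<in>{1..n}. M i k * x k) = 0 \<Longrightarrow> \<forall>i\<in>{1..n}. x i = 0"
  shows "\<exists>N. supp {1..n} N \<and> (\<forall>i\<in>{1..n}. \<forall>j\<in>{1..n}. matmul {1..n} M N i j = (if i = j then 1 else 0))
     \<and> (\<forall>i\<in>{1..n}. \<forall>j\<in>{1..n}. matmul {1..n} N M i j = (if i = j then 1 else 0))"
proof -
  define A where "A = mat n n (\<lambda>(i,j). M (Suc i) (Suc j))"
  have Ac: "A \<in> carrier_mat n n" by (simp add: A_def)
  have "det A \<noteq> 0"
  proof
    assume "det A = 0"
    then obtain v where v: "v \<in> carrier_vec n" "v \<noteq> 0\<^sub>v n" "A *\<^sub>v v = 0\<^sub>v n"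
      using det_0_iff_vec_prod_zero[OF Ac] by blast
    define x where "x k = (if k \<in> {1..n} then v $ (k - 1) else 0)" for k
    have "\<forall>i\<in>{1..n}. (\<Sum>k\<in>{1..n}. M i k * x k) = 0"
    proof
      fix i assume i: "i \<in> {1..n}"
      have "(\<Sum>k\<in>{1..n}. M i k * x k) = (\<Sum>k<n. M i (Suc k) * v $ k)"
        unfolding sum_shift1 by (simp add: x_def)
      also have "\<dots> = (A *\<^sub>v v) $ (i - 1)"
        using i v(1) by (auto simp: A_def scalar_prod_def lessThan_atLeast0 intro!: sum.cong)
      also have "\<dots> = 0" using v(3) i by auto
      finally show "(\<Sum>k\<in>{1..n}. M i k * x k) = 0" .
    qed
    then have "\<forall>i\<in>{1..n}. x i = 0" by (rule inj)
    then have "v = 0\<^sub>v n"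
      using v(1) by (intro eq_vecI) (auto simp: x_def, metis One_nat_def Suc_leI atLeastAtMost_iff diff_Suc_1 le_add1 plus_1_eq_Suc zero_less_Suc)
    then show False using v(2) by simp
  qed
  then have "A \<in> Units (ring_mat TYPE(real) n ())" by (rule det_non_zero_imp_unit[OF Ac])
  then obtain B where B: "B \<in> carrier_mat n n" "B * A = 1\<^sub>m n" "A * B = 1\<^sub>m n"
    by (auto simp: Units_def ring_mat_def)
  define N where "N a b = (if a \<in> {1..n} \<and> b \<in> {1..n} then B $$ (a - 1, b - 1) else 0)" for a b
  have sN: "supp {1..n} N" by (auto simp: supp_def N_def)
  have 1: "matmul {1..n} M N i j = (if i = j then 1 else 0)" if i: "i \<in> {1..n}" and j: "j \<in> {1..n}" for i j
  proof -
    have "matmul {1..n} M N i j = (\<Sum>k<n. M i (Suc k) * B $$ (k, j - 1))"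
      using j unfolding matmul_def sum_shift1 by (simp add: N_def)
    also have "\<dots> = (A * B) $$ (i - 1, j - 1)"
      using i j B(1) by (auto simp: A_def scalar_prod_def lessThan_atLeast0 intro!: sum.cong)
    also have "\<dots> = (if i = j then 1 else 0)" using B(3) i j by auto
    finally show ?thesis .
  qed
  have 2: "matmul {1..n} N M i j = (if i = j then 1 else 0)" if i: "i \<in> {1..n}" and j: "j \<in> {1..n}" for i j
  proof -
    have "matmul {1..n} N M i j = (\<Sum>k<n. B $$ (i - 1, k) * M (Suc k) j)"
      using i unfolding matmul_def sum_shift1 by (simp add: N_def)
    also have "\<dots> = (B * A) $$ (i - 1, j - 1)"
      using i j B(1) by (auto simp: A_def scalar_prod_def lessThan_atLeast0 intro!: sum.cong)
    also have "\<dots> = (if i = j then 1 else 0)" using B(2) i j by auto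
    finally show ?thesis .
  qed
  show ?thesis using sN 1 2 by blast
qed


lemma pinv_trm:
  assumes fin: "finite S" and X: "is_pinv S A X" and sA: "supp S A" and tA: "trm A = A"
  shows "is_pinv S A (trm X)"
proof -
  let ?m = "matmul S"
  note x = pinv_full[OF X sA] and as = matmul_assoc[OF fin]
  have 1: "?m (?m A (trm X)) A = A"
  proof -
    have "?m (?m A (trm X)) A = ?m (trm A) (?m (trm X) (trm A))" using tA by (simp add: as)
    also have "\<dots> = trm (?m (?m A X) A)" by (simp add: matmul_trm)
    finally show ?thesis using x(2) tA by simp
  qed
  have 2: "?m (?m (trm X) A) (trm X) = trm X"
  proof -
    have "?m (?m (trm X) A) (trm X) = ?m (trm X) (?m (trm A) (trm X))" using tA by (simp add: as)
    also have "\<dots> = trm (?m (?m X A) X)" by (simp add: matmul_trm)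
    finally show ?thesis using x(3) by simp
  qed
  have 3: "?m A (trm X) = ?m X A"
    by (metis tA x(5) matmul_trm)
  have 4: "?m (trm X) A = ?m A X"
    by (metis tA x(4) matmul_trm)
  show ?thesis
    using x(1) 1 2 3 4 x(4) x(5) unfolding is_pinv_def
    by (auto simp: supp_def trm_def) (metis trm_def)+
qed


lemma L_colsum: "oriented_graph n E \<Longrightarrow> (\<Sum>u\<in>verts n. laplacian n E u v) = 0"
  using L_rowsum[of n E v] by (simp add: laplacian_def mult.commute)

lemma L_pinv_exists:
  assumes og: "oriented_graph n E" and cg: "connected_graph n E" and n1: "n \<ge> 1"
  shows "\<exists>X. is_pinv (verts n) (laplacian n E) X"
proof -
  let ?S = "verts n" and ?L = "laplacian n E"
  have fin: "finite ?S" by (simp add: verts_def)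
  have cS: "card ?S = n" by (simp add: verts_def)
  have nz: "real n > 0" using n1 by simp
  define M where "M i j = ?L i j + (if i \<in> ?S \<and> j \<in> ?S then 1 else 0)" for i j
  have Mrow: "(\<Sum>k\<in>?S. M i k * x k) = (\<Sum>k\<in>?S. ?L i k * x k) + (\<Sum>k\<in>?S. x k)" if "i \<in> ?S" for i x
    using that by (simp add: M_def distrib_right sum.distrib)
  have inj: "\<forall>i\<in>{1..n}. x i = 0" if h: "\<forall>i\<in>{1..n}. (\<Sum>k\<in>{1..n}. M i k * x k) = 0" for x
  proof -
    let ?s = "\<Sum>k\<in>?S. x k"
    have "0 = (\<Sum>i\<in>?S. x i * (\<Sum>k\<in>?S. M i k * x k))" using h by (simp add: verts_def)
    also have "\<dots> = (\<Sum>i\<in>?S. x i * (\<Sum>k\<in>?S. ?L i k * x k)) + ?s * ?s"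
      by (simp add: Mrow distrib_left sum.distrib sum_distrib_right)
    also have "\<dots> = (\<Sum>e\<in>E. (x (fst e) - x (snd e))\<^sup>2) + ?s\<^sup>2"
      by (simp add: L_quad[OF og] power2_eq_square)
    finally have z: "(\<Sum>e\<in>E. (x (fst e) - x (snd e))\<^sup>2) + ?s\<^sup>2 = 0" by simp
    have q0: "(\<Sum>e\<in>E. (x (fst e) - x (snd e))\<^sup>2) \<ge> 0" by (simp add: sum_nonneg)
    have s2: "?s\<^sup>2 \<ge> 0" by simp
    have "?s\<^sup>2 = 0" using z q0 s2 by linarith
    then have s0: "?s = 0" by simp
    have qz: "(\<Sum>e\<in>E. (x (fst e) - x (snd e))\<^sup>2) = 0" using z q0 s2 by linarith
    then have "\<forall>e\<in>E. (x (fst e) - x (snd e))\<^sup>2 = 0"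
      using og_finite[OF og] by (subst (asm) sum_nonneg_eq_0_iff) auto
    then have eq: "\<forall>e\<in>E. x (fst e) = x (snd e)" by simp
    have 1: "1 \<in> ?S" using n1 by (simp add: verts_def)
    have c: "\<forall>i\<in>?S. x i = x 1" using edges_equal_const[OF cg eq _ 1] by blast
    then have "?s = real n * x 1" using cS by simp
    then have "x 1 = 0" using s0 nz by simp
    then show ?thesis using c by (simp add: verts_def)
  qed
  obtain N where sN: "supp {1..n} N"
    and MN: "\<forall>i\<in>{1..n}. \<forall>j\<in>{1..n}. matmul {1..n} M N i j = (if i = j then 1 else 0)"
    and NM: "\<forall>i\<in>{1..n}. \<forall>j\<in>{1..n}. matmul {1..n} N M i j = (if i = j then 1 else 0)"
    using inv_exists[of n M] inj by blast
  have MN': "(\<Sum>k\<in>?S. M i k * N k j) = (if i = j then 1 else 0)" if "i \<in> ?S" "j \<in> ?S" for i j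
    using MN that by (simp add: verts_def matmul_def)
  have NM': "(\<Sum>k\<in>?S. N i k * M k j) = (if i = j then 1 else 0)" if "i \<in> ?S" "j \<in> ?S" for i j
    using NM that by (simp add: verts_def matmul_def)
  have Mrs: "(\<Sum>j\<in>?S. M k j) = real n" if "k \<in> ?S" for k
    using that L_rowsum[OF og, of k] cS by (simp add: M_def sum.distrib)
  have Mcs: "(\<Sum>i\<in>?S. M i k) = real n" if "k \<in> ?S" for k
    using that L_colsum[OF og, of k] cS by (simp add: M_def sum.distrib)
  have Nrs: "(\<Sum>k\<in>?S. N i k) = 1 / real n" if i: "i \<in> ?S" for i
  proof -
    have "(\<Sum>j\<in>?S. (\<Sum>k\<in>?S. N i k * M k j)) = (\<Sum>j\<in>?S. if i = j then 1 else 0)"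
      by (rule sum.cong) (use NM' i in auto)
    then have "1 = (\<Sum>j\<in>?S. (\<Sum>k\<in>?S. N i k * M k j))" using i fin by simp
    also have "\<dots> = (\<Sum>k\<in>?S. N i k * (\<Sum>j\<in>?S. M k j))" by (subst sum.swap) (simp add: sum_distrib_left)
    also have "\<dots> = (\<Sum>k\<in>?S. N i k * real n)" by (rule sum.cong) (simp_all add: Mrs)
    also have "\<dots> = (\<Sum>k\<in>?S. N i k) * real n" by (simp add: sum_distrib_right)
    finally show ?thesis using nz by (simp add: field_simps)
  qed
  have Ncs: "(\<Sum>k\<in>?S. N k j) = 1 / real n" if j: "j \<in> ?S" for j
  proof -
    have "(\<Sum>i\<in>?S. (\<Sum>k\<in>?S. M i k * N k j)) = (\<Sum>i\<in>?S. if i = j then 1 else 0)"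
      by (rule sum.cong) (use MN' j in auto)
    then have "1 = (\<Sum>i\<in>?S. (\<Sum>k\<in>?S. M i k * N k j))" using j fin by simp
    also have "\<dots> = (\<Sum>k\<in>?S. (\<Sum>i\<in>?S. M i k) * N k j)" by (subst sum.swap) (simp add: sum_distrib_right)
    also have "\<dots> = (\<Sum>k\<in>?S. real n * N k j)" by (rule sum.cong) (simp_all add: Mcs)
    also have "\<dots> = (\<Sum>k\<in>?S. N k j) * real n" by (simp add: sum_distrib_left mult.commute)
    finally show ?thesis using nz by (simp add: field_simps)
  qed
  define X where "X i j = (if i \<in> ?S \<and> j \<in> ?S then N i j - 1 / (real n)\<^sup>2 else 0)" for i j
  have LX: "matmul ?S ?L X i j = (if i = j then 1 else 0) - 1 / real n" if i: "i \<in> ?S" and j: "j \<in> ?S" for i j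
  proof -
    have "matmul ?S ?L X i j = (\<Sum>k\<in>?S. ?L i k * N k j) - (\<Sum>k\<in>?S. ?L i k) / (real n)\<^sup>2"
      using j by (simp add: matmul_def X_def right_diff_distrib sum_subtractf sum_divide_distrib)
    also have "\<dots> = (\<Sum>k\<in>?S. ?L i k * N k j)" using L_rowsum[OF og] by simp
    also have "\<dots> = (\<Sum>k\<in>?S. M i k * N k j) - (\<Sum>k\<in>?S. N k j)"
      using i by (simp add: M_def distrib_right sum.distrib)
    also have "\<dots> = (if i = j then 1 else 0) - 1 / real n" using MN' Ncs i j by simp
    finally show ?thesis .
  qed
  have XL: "matmul ?S X ?L i j = (if i = j then 1 else 0) - 1 / real n" if i: "i \<in> ?S" and j: "j \<in> ?S" for i j
  proof -
    have "matmul ?S X ?L i j = (\<Sum>k\<in>?S. N i k * ?L k j) - (\<Sum>k\<in>?S. ?L k j) / (real n)\<^sup>2"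
      using i by (simp add: matmul_def X_def left_diff_distrib sum_subtractf sum_divide_distrib)
    also have "\<dots> = (\<Sum>k\<in>?S. N i k * ?L k j)" using L_colsum[OF og] by simp
    also have "\<dots> = (\<Sum>k\<in>?S. N i k * M k j) - (\<Sum>k\<in>?S. N i k)"
      using j by (simp add: M_def distrib_left sum.distrib)
    also have "\<dots> = (if i = j then 1 else 0) - 1 / real n" using NM' Nrs i j by simp
    finally show ?thesis .
  qed
  have Xcs: "(\<Sum>k\<in>?S. X k j) = 0" if j: "j \<in> ?S" for j
    using j Ncs[OF j] cS nz by (simp add: X_def sum_subtractf power2_eq_square)
  have 1: "matmul ?S (matmul ?S ?L X) ?L i j = ?L i j" if i: "i \<in> ?S" and j: "j \<in> ?S" for i j
  proof -
    have "matmul ?S (matmul ?S ?L X) ?L i j = (\<Sum>k\<in>?S. ((if i = k then 1 else 0) - 1 / real n) * ?L k j)"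
      unfolding matmul_def[of ?S "matmul ?S ?L X"] by (rule sum.cong) (simp_all add: LX i)
    also have "\<dots> = (\<Sum>k\<in>?S. (if k = i then ?L i j else 0) - ?L k j / real n)"
      by (rule sum.cong) (auto simp: left_diff_distrib)
    also have "\<dots> = ?L i j - (\<Sum>k\<in>?S. ?L k j) / real n"
      using i fin by (simp add: sum_subtractf sum_divide_distrib)
    also have "\<dots> = ?L i j" using L_colsum[OF og] by simp
    finally show ?thesis .
  qed
  have 2: "matmul ?S (matmul ?S X ?L) X i j = X i j" if i: "i \<in> ?S" and j: "j \<in> ?S" for i j
  proof -
    have "matmul ?S (matmul ?S X ?L) X i j = (\<Sum>k\<in>?S. ((if i = k then 1 else 0) - 1 / real n) * X k j)"
      unfolding matmul_def[of ?S "matmul ?S X ?L"] by (rule sum.cong) (simp_all add: XL i)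
    also have "\<dots> = (\<Sum>k\<in>?S. (if k = i then X i j else 0) - X k j / real n)"
      by (rule sum.cong) (auto simp: left_diff_distrib)
    also have "\<dots> = X i j - (\<Sum>k\<in>?S. X k j) / real n"
      using i fin by (simp add: sum_subtractf sum_divide_distrib)
    also have "\<dots> = X i j" using Xcs[OF j] by simp
    finally show ?thesis .
  qed
  have "is_pinv ?S ?L X"
    unfolding is_pinv_def using 1 2 LX XL by (auto simp: X_def)
  then show ?thesis by blast
qed

lemma Lpinv_props:
  assumes og: "oriented_graph n E" and cg: "connected_graph n E" and n1: "n \<ge> 1"
  shows "is_pinv (verts n) (laplacian n E) (Lpinv n E)" "\<And>i j. Lpinv n E i j = Lpinv n E j i"
proof -
  have fin: "finite (verts n)" by (simp add: verts_def)
  obtain X where X: "is_pinv (verts n) (laplacian n E) X" using L_pinv_exists[OF og cg n1] by blast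
  have u: "\<And>Y. is_pinv (verts n) (laplacian n E) Y \<Longrightarrow> Y = X"
    using pinv_unique[OF fin supp_L[OF og]] X by blast
  have ex: "\<exists>!Y. is_pinv (verts n) (laplacian n E) Y" using X u by blast
  show P: "is_pinv (verts n) (laplacian n E) (Lpinv n E)"
    unfolding Lpinv_def pinv_def by (rule theI'[OF ex])
  have "is_pinv (verts n) (laplacian n E) (trm (Lpinv n E))"
    by (rule pinv_trm[OF fin P supp_L[OF og] trm_L])
  then have "trm (Lpinv n E) = Lpinv n E" using u P by metis
  then show "\<And>i j. Lpinv n E i j = Lpinv n E j i" by (metis trm_def)
qed


lemma binom_mgf:
  fixes p :: real
  assumes p: "0 \<le> p" "p \<le> 1" and A: "\<forall>x\<in>A. \<mu> * (real x - a) \<ge> 0"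
  shows "measure_pmf.prob (binomial_pmf k p) A \<le> exp (- \<mu> * a) * (1 - p + p * exp \<mu>) ^ k"
proof -
  let ?M = "binomial_pmf k p"
  have sub: "set_pmf ?M \<subseteq> {..k}"
  proof
    fix x assume "x \<in> set_pmf ?M"
    then have "pmf ?M x \<noteq> 0" by (simp add: set_pmf_iff)
    then show "x \<in> {..k}" using p by (auto simp: pmf_binomial)
  qed
  have "measure_pmf.prob ?M A = measure_pmf.prob ?M (A \<inter> set_pmf ?M)"
    by (simp add: measure_Int_set_pmf)
  also have "\<dots> \<le> measure_pmf.prob ?M (A \<inter> {..k})"
    using sub by (intro measure_pmf.finite_measure_mono) auto
  also have "\<dots> = (\<Sum>x\<in>A \<inter> {..k}. pmf ?M x)" by (simp add: measure_measure_pmf_finite)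
  also have "\<dots> \<le> (\<Sum>x\<in>A \<inter> {..k}. pmf ?M x * exp (\<mu> * (real x - a)))"
  proof (rule sum_mono)
    fix x assume "x \<in> A \<inter> {..k}"
    then have "exp (\<mu> * (real x - a)) \<ge> 1" using A by simp
    then show "pmf ?M x \<le> pmf ?M x * exp (\<mu> * (real x - a))"
      using pmf_nonneg[of ?M x] by (simp add: mult_le_cancel_left1)
  qed
  also have "\<dots> \<le> (\<Sum>x\<in>{..k}. pmf ?M x * exp (\<mu> * (real x - a)))"
    by (rule sum_mono2) auto
  also have "\<dots> = (\<Sum>x\<in>{..k}. exp (- \<mu> * a) * (real (k choose x) * (p * exp \<mu>) ^ x * (1 - p) ^ (k - x)))"
  proof (rule sum.cong)
    fix x assume "x \<in> {..k}"
    have "exp (\<mu> * (real x - a)) = exp (- \<mu> * a) * exp \<mu> ^ x"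
      by (simp add: right_diff_distrib exp_diff exp_of_nat_mult[symmetric] field_simps exp_minus)
    then show "pmf ?M x * exp (\<mu> * (real x - a)) = exp (- \<mu> * a) * (real (k choose x) * (p * exp \<mu>) ^ x * (1 - p) ^ (k - x))"
      using p by (simp add: pmf_binomial power_mult_distrib mult_ac)
  qed simp
  also have "\<dots> = exp (- \<mu> * a) * (p * exp \<mu> + (1 - p)) ^ k"
    by (simp add: binomial_ring sum_distrib_left)
  finally show ?thesis by (simp add: add.commute)
qed

lemma tail_gen:
  fixes p :: real
  assumes p: "0 \<le> p" "p \<le> 1" and A: "\<forall>x\<in>A. \<mu> * (real x - a) \<ge> 0"
    and c: "1 - p + p * exp \<mu> \<le> exp c" and B: "- \<mu> * a + real k * c \<le> - B"
  shows "measure_pmf.prob (binomial_pmf k p) A \<le> exp (- B)"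
proof -
  have b0: "0 \<le> 1 - p + p * exp \<mu>" using p by (simp add: add_nonneg_nonneg)
  have "measure_pmf.prob (binomial_pmf k p) A \<le> exp (- \<mu> * a) * (1 - p + p * exp \<mu>) ^ k"
    by (rule binom_mgf[OF p A])
  also have "\<dots> \<le> exp (- \<mu> * a) * exp c ^ k"
    by (intro mult_left_mono power_mono b0 c) simp
  also have "\<dots> = exp (- \<mu> * a) * exp (real k * c)" by (simp add: exp_of_nat_mult)
  also have "\<dots> = exp (- \<mu> * a + real k * c)" by (rule exp_add[symmetric])
  also have "\<dots> \<le> exp (- B)" using B by simp
  finally show ?thesis .
qed

lemma exp_neg_bound: fixes l :: real assumes "0 \<le> l" shows "exp (- l) \<le> 1 - l + l\<^sup>2"
proof -
  have e: "1 + l + l\<^sup>2 / 2 \<le> exp l" by (rule exp_lower_Taylor_quadratic[OF assms])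
  have pos: "0 < 1 + l + l\<^sup>2 / 2" using assms by (simp add: add_pos_nonneg)
  have "1 \<le> (1 - l + l\<^sup>2) * (1 + l + l\<^sup>2 / 2)"
  proof -
    have "(1 - l + l\<^sup>2) * (1 + l + l\<^sup>2 / 2) = 1 + l\<^sup>2/2 + l^3/2 + l^4/2"
      unfolding power2_eq_square power3_eq_cube power4_eq_xxxx by (simp add: field_simps)
    moreover have "0 \<le> l\<^sup>2/2 + l^3/2 + l^4/2" using assms by simp
    ultimately show ?thesis by linarith
  qed
  have q0: "0 < 1 - l + l\<^sup>2"
    using \<open>1 \<le> (1 - l + l\<^sup>2) * (1 + l + l\<^sup>2 / 2)\<close> pos
    by (smt (verit) mult_nonpos_nonneg)
  have "exp (- l) = 1 / exp l" by (simp add: exp_minus field_simps)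
  also have "\<dots> \<le> 1 / (1 + l + l\<^sup>2 / 2)" using e pos by (simp add: frac_le)
  also have "\<dots> \<le> 1 - l + l\<^sup>2"
    using \<open>1 \<le> (1 - l + l\<^sup>2) * (1 + l + l\<^sup>2 / 2)\<close> pos by (simp add: divide_le_eq mult.commute)
  finally show ?thesis .
qed

lemma exp_pos_bound: fixes l :: real assumes "0 \<le> l" "l \<le> 1" shows "exp l \<le> 1 + l + l\<^sup>2"
  by (rule exp_bound[OF assms])

lemma tails:
  fixes p m l :: real
  assumes p: "0 < p" "p < 1" and m: "m = p \<or> m = 1 - p" and l: "0 \<le> l" "l \<le> 1"
  shows "measure_pmf.prob (binomial_pmf k p) {x. real x \<ge> real k * (p + 2 * m * l)} \<le> exp (- (real k * (m * l\<^sup>2)))"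
    and "measure_pmf.prob (binomial_pmf k p) {x. real x \<le> real k * (p - 2 * m * l)} \<le> exp (- (real k * (m * l\<^sup>2)))"
proof -
  have p': "0 \<le> p" "p \<le> 1" using p by auto
  have e1: "exp l \<le> 1 + l + l\<^sup>2" by (rule exp_pos_bound[OF l])
  have e2: "exp (- l) \<le> 1 - l + l\<^sup>2" by (rule exp_neg_bound[OF l(1)])
  have k0: "0 \<le> real k" by simp
  have ineq1: "1 + y \<le> exp y" for y :: real by (rule exp_ge_add_one_self)
  show "measure_pmf.prob (binomial_pmf k p) {x. real x \<ge> real k * (p + 2 * m * l)} \<le> exp (- (real k * (m * l\<^sup>2)))"
  proof (cases "m = p")
    case True
    show ?thesis
    proof (rule tail_gen[OF p', where \<mu> = l and a = "real k * (p + 2 * m * l)" and c = "p * (exp l - 1)"])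
      show "\<forall>x\<in>{x. real x \<ge> real k * (p + 2 * m * l)}. l * (real x - real k * (p + 2 * m * l)) \<ge> 0"
        using l by auto
      show "1 - p + p * exp l \<le> exp (p * (exp l - 1))" using ineq1[of "p * (exp l - 1)"] by (simp add: algebra_simps)
      have "p * (exp l - 1) \<le> p * (l + l\<^sup>2)" using e1 p by (intro mult_left_mono) auto
      then have "p * (exp l - 1) - l * (p + 2 * m * l) \<le> - (m * l\<^sup>2)" using True by (simp add: algebra_simps power2_eq_square)
      from mult_left_mono[OF this k0]
      show "- l * (real k * (p + 2 * m * l)) + real k * (p * (exp l - 1)) \<le> - (real k * (m * l\<^sup>2))"
        by (simp add: algebra_simps)
    qed
  next
    case False
    then have mq: "m = 1 - p" using m by auto
    show ?thesis
    proof (rule tail_gen[OF p', where \<mu> = l and a = "real k * (p + 2 * m * l)" and c = "l + (1 - p) * (exp (- l) - 1)"])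
      show "\<forall>x\<in>{x. real x \<ge> real k * (p + 2 * m * l)}. l * (real x - real k * (p + 2 * m * l)) \<ge> 0"
        using l by auto
      have "1 - p + p * exp l = exp l * (1 + (1 - p) * (exp (- l) - 1))"
        by (simp add: algebra_simps exp_minus)
      also have "\<dots> \<le> exp l * exp ((1 - p) * (exp (- l) - 1))"
        by (intro mult_left_mono ineq1) simp
      finally show "1 - p + p * exp l \<le> exp (l + (1 - p) * (exp (- l) - 1))" by (simp add: exp_add)
      have "(1 - p) * (exp (- l) - 1) \<le> (1 - p) * (- l + l\<^sup>2)" using e2 p by (intro mult_left_mono) auto
      then have "l + (1 - p) * (exp (- l) - 1) - l * (p + 2 * m * l) \<le> - (m * l\<^sup>2)" unfolding mq by (simp add: algebra_simps power2_eq_square)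
      from mult_left_mono[OF this k0]
      show "- l * (real k * (p + 2 * m * l)) + real k * (l + (1 - p) * (exp (- l) - 1)) \<le> - (real k * (m * l\<^sup>2))"
        by (simp add: algebra_simps)
    qed
  qed
  show "measure_pmf.prob (binomial_pmf k p) {x. real x \<le> real k * (p - 2 * m * l)} \<le> exp (- (real k * (m * l\<^sup>2)))"
  proof (cases "m = p")
    case True
    show ?thesis
    proof (rule tail_gen[OF p', where \<mu> = "- l" and a = "real k * (p - 2 * m * l)" and c = "p * (exp (- l) - 1)"])
      show "\<forall>x\<in>{x. real x \<le> real k * (p - 2 * m * l)}. - l * (real x - real k * (p - 2 * m * l)) \<ge> 0"
        using l by (auto intro!: mult_nonneg_nonpos)
      show "1 - p + p * exp (- l) \<le> exp (p * (exp (- l) - 1))" using ineq1[of "p * (exp (- l) - 1)"] by (simp add: algebra_simps)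
      have "p * (exp (- l) - 1) \<le> p * (- l + l\<^sup>2)" using e2 p by (intro mult_left_mono) auto
      then have "p * (exp (- l) - 1) + l * (p - 2 * m * l) \<le> - (m * l\<^sup>2)" using True by (simp add: algebra_simps power2_eq_square)
      from mult_left_mono[OF this k0]
      show "- (- l) * (real k * (p - 2 * m * l)) + real k * (p * (exp (- l) - 1)) \<le> - (real k * (m * l\<^sup>2))"
        by (simp add: algebra_simps)
    qed
  next
    case False
    then have mq: "m = 1 - p" using m by auto
    show ?thesis
    proof (rule tail_gen[OF p', where \<mu> = "- l" and a = "real k * (p - 2 * m * l)" and c = "- l + (1 - p) * (exp l - 1)"])
      show "\<forall>x\<in>{x. real x \<le> real k * (p - 2 * m * l)}. - l * (real x - real k * (p - 2 * m * l)) \<ge> 0"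
        using l by (auto intro!: mult_nonneg_nonpos)
      have "1 - p + p * exp (- l) = exp (- l) * (1 + (1 - p) * (exp l - 1))"
        by (simp add: algebra_simps exp_minus)
      also have "\<dots> \<le> exp (- l) * exp ((1 - p) * (exp l - 1))"
        by (intro mult_left_mono ineq1) simp
      finally show "1 - p + p * exp (- l) \<le> exp (- l + (1 - p) * (exp l - 1))" by (simp only: exp_add)
      have "(1 - p) * (exp l - 1) \<le> (1 - p) * (l + l\<^sup>2)" using e1 p by (intro mult_left_mono) auto
      then have "- l + (1 - p) * (exp l - 1) + l * (p - 2 * m * l) \<le> - (m * l\<^sup>2)" unfolding mq by (simp add: algebra_simps power2_eq_square)
      from mult_left_mono[OF this k0]
      show "- (- l) * (real k * (p - 2 * m * l)) + real k * (- l + (1 - p) * (exp l - 1)) \<le> - (real k * (m * l\<^sup>2))"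
        by (simp add: algebra_simps)
    qed
  qed
qed


lemma edge_core:
  fixes F p t m :: real
  assumes p: "0 < p" "p < 1" and m: "m = min p (1 - p)" and t: "0 \<le> t" "t \<le> m / 2"
    and F: "\<bar>F - p\<bar> \<le> t"
  shows "0 < F" "F < 1"
    "\<bar>(ln F - ln (1 - F)) - (ln p - ln (1 - p)) - (1 / p + 1 / (1 - p)) * (F - p)\<bar> \<le> 4 * t\<^sup>2 / m\<^sup>2"
proof -
  define q where "q = 1 - p"
  have q: "0 < q" using p by (simp add: q_def)
  have mp: "m \<le> p" "m \<le> q" "0 < m" using m p q by (auto simp: q_def)
  show F0: "0 < F" using F t mp by linarith
  have "m \<le> 1 - p" using mp(2) by (simp add: q_def)
  then show F1: "F < 1" using F t mp(3) by linarith
  define u1 where "u1 = (F - p) / p"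
  define u2 where "u2 = (p - F) / q"
  have tm: "t / m \<le> 1 / 2" using t mp by (simp add: divide_le_eq)
  have "\<bar>u1\<bar> = \<bar>F - p\<bar> / p" using p by (simp add: u1_def abs_div)
  also have "\<dots> \<le> t / m" using F mp t by (intro frac_le) auto
  finally have u1t: "\<bar>u1\<bar> \<le> t / m" .
  have "\<bar>u2\<bar> = \<bar>F - p\<bar> / q" using q by (simp add: u2_def abs_div abs_minus_commute)
  also have "\<dots> \<le> t / m" using F mp t by (intro frac_le) auto
  finally have u2t: "\<bar>u2\<bar> \<le> t / m" .
  have Fu: "F = p * (1 + u1)" using p by (simp add: u1_def field_simps)
  have Fu2: "1 - F = q * (1 + u2)" using q by (simp add: u2_def q_def field_simps)
  have pos1: "1 + u1 > 0" using u1t tm by linarith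
  have pos2: "1 + u2 > 0" using u2t tm by linarith
  have l1: "ln F - ln p = ln (1 + u1)" using Fu p pos1 by (simp add: ln_mult)
  have l2: "ln (1 - F) - ln q = ln (1 + u2)" using Fu2 q pos2 by (simp add: ln_mult)
  have lin: "(1 / p + 1 / q) * (F - p) = u1 - u2" using p q by (simp add: u1_def u2_def field_simps)
  have b1: "\<bar>ln (1 + u1) - u1\<bar> \<le> 2 * u1\<^sup>2" using u1t tm by (intro abs_ln_one_plus_x_minus_x_bound) linarith
  have b2: "\<bar>ln (1 + u2) - u2\<bar> \<le> 2 * u2\<^sup>2" using u2t tm by (intro abs_ln_one_plus_x_minus_x_bound) linarith
  have s1: "u1\<^sup>2 \<le> (t / m)\<^sup>2" using u1t by (metis abs_ge_zero power2_abs power_mono)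
  have s2: "u2\<^sup>2 \<le> (t / m)\<^sup>2" using u2t by (metis abs_ge_zero power2_abs power_mono)
  have "(ln F - ln (1 - F)) - (ln p - ln (1 - p)) - (1 / p + 1 / (1 - p)) * (F - p)
      = (ln (1 + u1) - u1) - (ln (1 + u2) - u2)"
    using l1 l2 lin by (simp add: q_def)
  then have "\<bar>(ln F - ln (1 - F)) - (ln p - ln (1 - p)) - (1 / p + 1 / (1 - p)) * (F - p)\<bar> \<le> 2 * u1\<^sup>2 + 2 * u2\<^sup>2"
    using b1 b2 by linarith
  also have "\<dots> \<le> 4 * (t / m)\<^sup>2" using s1 s2 by linarith
  finally show "\<bar>(ln F - ln (1 - F)) - (ln p - ln (1 - p)) - (1 / p + 1 / (1 - p)) * (F - p)\<bar> \<le> 4 * t\<^sup>2 / m\<^sup>2"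
    by (simp add: power_divide)
qed

lemma edge_delta:
  assumes wa: "w (fst e) > 0" and wb: "w (snd e) > 0" and m: "m = min (pe w e) (1 - pe w e)"
    and t: "0 \<le> t" "t \<le> m / 2" and F: "\<bar>Fr k X e - pe w e\<bar> \<le> t"
  shows "0 < Fr k X e" "Fr k X e < 1" "\<bar>Delta w k X e\<bar> \<le> 4 * t\<^sup>2 / m\<^sup>2"
proof -
  let ?p = "pe w e" and ?F = "Fr k X e"
  have p: "0 < ?p" "?p < 1" using wa wb by (auto simp: pe_def divide_less_eq)
  note c = edge_core[OF p m t F]
  show "0 < ?F" "?F < 1" using c by auto
  have q: "1 - ?p = w (snd e) / (w (fst e) + w (snd e))" using wa wb by (simp add: pe_def field_simps)
  have r: "ln (Rr k X e) = ln ?F - ln (1 - ?F)" using c(1,2) by (simp add: Rr_def ln_div)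
  have rho: "ln (rho w e) = ln ?p - ln (1 - ?p)"
  proof -
    have "?p / (1 - ?p) = (w (fst e) / (w (fst e) + w (snd e))) / (w (snd e) / (w (fst e) + w (snd e)))"
      using q by (simp add: pe_def)
    also have "\<dots> = rho w e"
    proof -
      have "(w (fst e) / (w (fst e) + w (snd e))) / (w (snd e) / (w (fst e) + w (snd e))) = w (fst e) / w (snd e)"
        using wa wb by simp
      then show ?thesis by (simp add: rho_def)
    qed
    finally have "rho w e = ?p / (1 - ?p)" by simp
    then show ?thesis using p by (simp add: ln_div)
  qed
  have vv: "vv w e = 1 / ?p + 1 / (1 - ?p)"
    using wa wb q by (simp add: vv_def rho_def pe_def field_simps power2_eq_square)
  have "Delta w k X e = (ln ?F - ln (1 - ?F)) - (ln ?p - ln (1 - ?p)) - (1 / ?p + 1 / (1 - ?p)) * (?F - ?p)"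
    by (simp add: Delta_def VFp_def r rho vv)
  then show "\<bar>Delta w k X e\<bar> \<le> 4 * t\<^sup>2 / m\<^sup>2" using c(3) by simp
qed


lemma num_bound:
  fixes n :: nat and \<delta> C :: real and cE :: nat
  assumes n1: "n \<ge> 1" and d0: "0 < \<delta>" and d1: "\<delta> \<le> exp (-1)" and C: "C \<ge> 4 * ln (real n / \<delta>)"
    and cE: "cE \<le> n ^ 2"
  shows "real cE * (2 * exp (- C)) \<le> \<delta>"
proof -
  have npos: "real n > 0" using n1 by simp
  have x: "real n / \<delta> > 0" using npos d0 by simp
  have "exp (1::real) \<ge> 2" using exp_ge_add_one_self[of 1] by simp
  then have "exp (-1::real) \<le> 1/2" by (simp add: exp_minus field_simps)
  then have dh: "\<delta> \<le> 1/2" using d1 by simp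
  have "exp (- C) \<le> exp (- (4 * ln (real n / \<delta>)))" using C by simp
  also have "\<dots> = 1 / exp (ln (real n / \<delta>)) ^ 4"
    by (simp add: exp_minus exp_of_nat_mult[symmetric] field_simps)
  also have "\<dots> = (\<delta> / real n) ^ 4" using x by (simp add: power_divide)
  finally have e: "exp (- C) \<le> (\<delta> / real n) ^ 4" .
  have "real cE * (2 * exp (- C)) \<le> real n ^ 2 * (2 * (\<delta> / real n) ^ 4)"
    using cE e by (intro mult_mono) (auto simp: of_nat_le_iff[symmetric])
  also have "\<dots> = 2 * \<delta> ^ 4 / real n ^ 2" using npos by (simp add: field_simps power_divide)
  also have "\<dots> \<le> 2 * \<delta> ^ 4"
  proof -
    have "real n ^ 2 \<ge> 1" using n1 by simp
    then show ?thesis using d0 by (simp add: divide_le_eq)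
  qed
  also have "\<dots> \<le> \<delta>"
  proof -
    have "\<delta> ^ 3 \<le> (1/2) ^ 3" using d0 dh by (intro power_mono) auto
    moreover have "(1/2::real) ^ 3 = 1/8" by (simp add: power_divide)
    ultimately have "2 * \<delta> ^ 3 \<le> 1" by linarith
    then have "\<delta> * (2 * \<delta> ^ 3) \<le> \<delta> * 1" using d0 by (intro mult_left_mono) auto
    then show ?thesis by (simp add: power_numeral_reduce algebra_simps)
  qed
  finally show ?thesis .
qed


lemma Bmul_add: "Bmul E (\<lambda>e. f e + g e) v = Bmul E f v + Bmul E g v"
  by (simp add: Bmul_def distrib_left sum.distrib)

lemma logW_add: "log_What n E (\<lambda>e. f e + g e) a = log_What n E f a + log_What n E g a"
  by (simp add: log_What_def Bmul_add distrib_left sum.distrib)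

lemma sqnorm_sq:
  assumes sym: "\<And>a c. Lpinv n E a c = Lpinv n E c a" and i: "i \<in> verts n" and j: "j \<in> verts n"
  shows "sqnorm_ij n E i j x = (log_What n E x i - log_What n E x j)\<^sup>2"
proof -
  define y where "y a = log_What n E x a" for a
  have fin: "finite (verts n)" by (simp add: verts_def)
  have z: "(\<Sum>c\<in>verts n. Bmul E x c * Lpinv n E c a) = y a" for a
    by (simp add: y_def log_What_def sym mult.commute)
  have y: "(\<Sum>c\<in>verts n. Lpinv n E a c * Bmul E x c) = y a" for a
    by (simp add: y_def log_What_def)
  have "sqnorm_ij n E i j x = (\<Sum>a\<in>verts n. \<Sum>c\<in>verts n. (unitdiff i j a * y a) * (unitdiff i j c * y c))"
    unfolding sqnorm_ij_def Let_def z y by (simp add: Qmat_def mult_ac)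
  also have "\<dots> = (\<Sum>a\<in>verts n. unitdiff i j a * y a) * (\<Sum>c\<in>verts n. unitdiff i j c * y c)"
    by (simp add: sum_product)
  also have "\<dots> = (y i - y j)\<^sup>2" using fin i j by (simp add: sum_unitdiff power2_eq_square)
  finally show ?thesis by (simp add: y_def)
qed

lemma logW_rho:
  assumes og: "oriented_graph n E" and cg: "connected_graph n E" and n1: "n \<ge> 1"
    and wpos: "\<forall>i\<in>verts n. w i > 0" and i: "i \<in> verts n" and j: "j \<in> verts n"
  shows "log_What n E (\<lambda>e. ln (rho w e)) i - log_What n E (\<lambda>e. ln (rho w e)) j = ln (w i) - ln (w j)"
proof -
  let ?S = "verts n" and ?L = "laplacian n E" and ?P = "Lpinv n E"
  have fin: "finite ?S" by (simp add: verts_def)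
  note pv = Lpinv_props[OF og cg n1]
  define lw where "lw u = ln (w u)" for u
  have B: "Bmul E (\<lambda>e. ln (rho w e)) v = (\<Sum>u\<in>?S. ?L v u * lw u)" for v
  proof -
    have "Bmul E (\<lambda>e. ln (rho w e)) v = (\<Sum>e\<in>E. incidence E v e * (lw (fst e) - lw (snd e)))"
      unfolding Bmul_def
    proof (rule sum.cong)
      fix e assume e: "e \<in> E"
      have "w (fst e) > 0" "w (snd e) > 0" using og_edge[OF og e] wpos by auto
      then show "incidence E v e * ln (rho w e) = incidence E v e * (lw (fst e) - lw (snd e))"
        by (simp add: rho_def lw_def ln_div)
    qed simp
    then show ?thesis by (simp add: L_mulvec[OF og])
  qed
  have W: "log_What n E (\<lambda>e. ln (rho w e)) a = (\<Sum>u\<in>?S. matmul ?S ?P ?L a u * lw u)" for a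
  proof -
    have "log_What n E (\<lambda>e. ln (rho w e)) a = (\<Sum>v\<in>?S. \<Sum>u\<in>?S. ?P a v * ?L v u * lw u)"
      by (simp add: log_What_def B sum_distrib_left mult.assoc)
    also have "\<dots> = (\<Sum>u\<in>?S. \<Sum>v\<in>?S. ?P a v * ?L v u * lw u)" by (rule sum.swap)
    also have "\<dots> = (\<Sum>u\<in>?S. matmul ?S ?P ?L a u * lw u)"
      by (simp add: matmul_def sum_distrib_right)
    finally show ?thesis .
  qed
  define r where "r a = log_What n E (\<lambda>e. ln (rho w e)) a - lw a" for a
  have LPL: "matmul ?S ?L (matmul ?S ?P ?L) v t = ?L v t" if "v \<in> ?S" "t \<in> ?S" for v t
    using pv(1) that by (simp add: is_pinv_def matmul_assoc[OF fin, symmetric])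
  have "(\<Sum>u\<in>?S. ?L v u * r u) = 0" if v: "v \<in> ?S" for v
  proof -
    have "(\<Sum>u\<in>?S. ?L v u * r u) = (\<Sum>u\<in>?S. \<Sum>t\<in>?S. ?L v u * matmul ?S ?P ?L u t * lw t) - (\<Sum>u\<in>?S. ?L v u * lw u)"
      by (simp add: r_def W right_diff_distrib sum_subtractf sum_distrib_left mult.assoc)
    also have "(\<Sum>u\<in>?S. \<Sum>t\<in>?S. ?L v u * matmul ?S ?P ?L u t * lw t) = (\<Sum>t\<in>?S. \<Sum>u\<in>?S. ?L v u * matmul ?S ?P ?L u t * lw t)"
      by (rule sum.swap)
    also have "\<dots> = (\<Sum>t\<in>?S. matmul ?S ?L (matmul ?S ?P ?L) v t * lw t)"
      by (simp add: matmul_def[of ?S ?L] sum_distrib_right)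
    also have "\<dots> = (\<Sum>t\<in>?S. ?L v t * lw t)"
      by (rule sum.cong) (simp_all add: LPL v)
    finally show ?thesis by simp
  qed
  then have "r i = r j" using L_kernel_const[OF og cg _ i j] by blast
  then show ?thesis by (simp add: r_def lw_def)
qed

lemma det_part:
  assumes og: "oriented_graph n E" and cg: "connected_graph n E" and n1: "n \<ge> 1"
    and wpos: "\<forall>i\<in>verts n. w i > 0" and i: "i \<in> verts n" and j: "j \<in> verts n"
  shows "(log_What n E (\<lambda>e. ln (Rr k X e)) i - log_What n E (\<lambda>e. ln (Rr k X e)) j - ln (w i / w j))\<^sup>2
     \<le> 2 * sqnorm_ij n E i j (VFp w k X) + 2 * sqnorm_ij n E i j (Delta w k X)"
proof -
  note pv = Lpinv_props[OF og cg n1]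
  have lr: "(\<lambda>e. ln (Rr k X e)) = (\<lambda>e. ln (rho w e) + (VFp w k X e + Delta w k X e))"
    by (simp add: Delta_def)
  define a where "a = log_What n E (VFp w k X) i - log_What n E (VFp w k X) j"
  define d where "d = log_What n E (Delta w k X) i - log_What n E (Delta w k X) j"
  have "log_What n E (\<lambda>e. ln (Rr k X e)) i - log_What n E (\<lambda>e. ln (Rr k X e)) j - ln (w i / w j) = a + d"
  proof -
    have wi: "w i > 0" and wj: "w j > 0" using wpos i j by auto
    show ?thesis
      using logW_rho[OF og cg n1 wpos i j] wi wj
      by (simp add: lr logW_add a_def d_def ln_div \<open>w i > 0\<close>[THEN less_imp_neq, symmetric] \<open>w j > 0\<close>[THEN less_imp_neq, symmetric])
  qed
  moreover have "sqnorm_ij n E i j (VFp w k X) = a\<^sup>2" "sqnorm_ij n E i j (Delta w k X) = d\<^sup>2"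
    using sqnorm_sq[OF pv(2) i j] by (simp_all add: a_def d_def)
  moreover have "(a + d)\<^sup>2 \<le> 2 * a\<^sup>2 + 2 * d\<^sup>2"
  proof -
    have "0 \<le> (a - d)\<^sup>2" by simp
    then show ?thesis unfolding power2_sum power2_diff by linarith
  qed
  ultimately show ?thesis by simp
qed


lemma Emax_ge1:
  assumes og: "oriented_graph n E" and e: "e \<in> E"
  shows "E_max n E \<ge> 1"
proof -
  obtain u v where uv: "e = (u, v)" by (cases e)
  have uvS: "u \<in> verts n" "v \<in> verts n" "u \<noteq> v" using og_edge[OF og e] uv by auto
  have sp: "simple_path E u v [u, v]"
    using e uv uvS by (auto simp: simple_path_def adj_def less_Suc_eq)
  have ep: "edge_on_path (u, v) [u, v]" by (auto simp: edge_on_path_def intro!: exI[of _ 0])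
  have "(u, v) \<in> path_edges E u v" using sp ep e uv by (auto simp: path_edges_def)
  moreover have "finite (path_edges E u v)" using og_finite[OF og] by (rule rev_finite_subset) (auto simp: path_edges_def)
  ultimately have c1: "card (path_edges E u v) \<ge> 1"
    by (metis One_nat_def Suc_leI card_gt_0_iff empty_iff)
  have fin: "finite {card (path_edges E i j) | i j. i \<in> verts n \<and> j \<in> verts n}"
  proof -
    have "{card (path_edges E i j) | i j. i \<in> verts n \<and> j \<in> verts n}
        = (\<lambda>(i, j). card (path_edges E i j)) ` (verts n \<times> verts n)" by auto
    then show ?thesis by (simp add: verts_def)
  qed
  have "card (path_edges E u v) \<le> E_max n E"
    unfolding E_max_def using uvS by (intro Max_ge[OF fin]) blast
  then show ?thesis using c1 by simp
qed

lemma cardE: "oriented_graph n E \<Longrightarrow> card E \<le> n ^ 2"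
proof -
  assume og: "oriented_graph n E"
  have "E \<subseteq> verts n \<times> verts n" using og by (auto simp: oriented_graph_def)
  then have "card E \<le> card (verts n \<times> verts n)" by (intro card_mono) (auto simp: verts_def)
  then show ?thesis by (simp add: verts_def card_cartesian_product power2_eq_square)
qed

lemma prob_component:
  assumes "finite E" "e \<in> E"
  shows "measure_pmf.prob (outcomes E w k) {X. P (X e)} = measure_pmf.prob (binomial_pmf k (pe w e)) {x. P x}"
proof -
  have "measure_pmf.prob (binomial_pmf k (pe w e)) {x. P x} = measure_pmf.prob (map_pmf (\<lambda>f. f e) (outcomes E w k)) {x. P x}"
    using assms by (simp add: outcomes_def Pi_pmf_component)
  also have "\<dots> = measure_pmf.prob (outcomes E w k) {X. P (X e)}" by (simp add: vimage_def)
  finally show ?thesis by simp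
qed


lemma main_lemma:
  fixes n :: nat and E :: "(nat \<times> nat) set" and w :: "nat \<Rightarrow> real" and b \<delta> C :: real and k :: nat
  assumes n1: "n \<ge> 1" and og: "oriented_graph n E" and cg: "connected_graph n E"
    and wpos: "\<forall>i\<in>verts n. w i > 0" and wb: "\<forall>i\<in>verts n. \<forall>j\<in>verts n. w i / w j \<le> b"
    and d0: "0 < \<delta>" and d1: "\<delta> \<le> exp (-1)" and Cb: "C \<ge> 4 * ln (real n / \<delta>)"
    and kb: "real k \<ge> 32 * b * (C + 1) * max (Omega_max n E) (real (E_max n E))"
  shows "measure_pmf.prob (outcomes E w k)
        {X. (\<forall>e\<in>E. 0 < Fr k X e \<and> Fr k X e < 1) \<and>
            (\<forall>i\<in>verts n. \<forall>j\<in>verts n.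
               (log_What n E (\<lambda>e. ln (Rr k X e)) i - log_What n E (\<lambda>e. ln (Rr k X e)) j
                  - ln (w i / w j))\<^sup>2
               \<le> 2 * sqnorm_ij n E i j (VFp w k X) + 2 * sqnorm_ij n E i j (Delta w k X)) \<and>
            (\<forall>e\<in>E. \<bar>Delta w k X e\<bar> \<le> 32 * b * C / real k)}
      \<ge> 1 - \<delta>"
proof -
  let ?\<Omega> = "outcomes E w k"
  let ?T = "{X. (\<forall>e\<in>E. 0 < Fr k X e \<and> Fr k X e < 1) \<and>
            (\<forall>i\<in>verts n. \<forall>j\<in>verts n.
               (log_What n E (\<lambda>e. ln (Rr k X e)) i - log_What n E (\<lambda>e. ln (Rr k X e)) j
                  - ln (w i / w j))\<^sup>2
               \<le> 2 * sqnorm_ij n E i j (VFp w k X) + 2 * sqnorm_ij n E i j (Delta w k X)) \<and>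
            (\<forall>e\<in>E. \<bar>Delta w k X e\<bar> \<le> 32 * b * C / real k)}"
  have fin: "finite E" by (rule og_finite[OF og])
  have v1: "1 \<in> verts n" using n1 by (simp add: verts_def)
  have b1: "1 \<le> b" using wb v1 wpos by force
  have L1: "1 \<le> ln (real n / \<delta>)"
  proof -
    have "exp (-1) * exp 1 = (1::real)" by (simp add: exp_minus)
    then have "exp 1 \<le> 1 / \<delta>" using d1 d0 by (simp add: field_simps) (metis mult_right_mono exp_ge_zero mult.commute)
    also have "\<dots> \<le> real n / \<delta>" using n1 d0 by (simp add: divide_right_mono)
    finally have "exp 1 \<le> real n / \<delta>" .
    then show ?thesis using n1 d0 by (subst ln_ge_iff) auto
  qed
  have C4: "4 \<le> C" using Cb L1 by linarith
  define p where "p e = pe w e" for e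
  define m where "m e = min (p e) (1 - p e)" for e
  define l where "l e = sqrt (C / (m e * real k))" for e
  define t where "t e = 2 * m e * l e" for e
  define bad where "bad e = {X. real (X e) \<ge> real k * (p e + t e)} \<union> {X. real (X e) \<le> real k * (p e - t e)}" for e
  have kC: "real k \<ge> 32 * b * C" "k > 0" if "e \<in> E" for e
  proof -
    have "real (E_max n E) \<ge> 1" using Emax_ge1[OF og that] by simp
    then have mx: "max (Omega_max n E) (real (E_max n E)) \<ge> 1" by linarith
    have "32 * b * C \<le> 32 * b * (C + 1)" using b1 by simp
    also have "\<dots> \<le> 32 * b * (C + 1) * max (Omega_max n E) (real (E_max n E))"
    proof -
      have pos: "0 \<le> 32 * b * (C + 1)" using b1 C4 by simp
      show ?thesis using mult_left_mono[OF mx pos] by simp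
    qed
    finally show "real k \<ge> 32 * b * C" using kb by linarith
    moreover have "32 * b * C > 0" using b1 C4 by simp
    ultimately have "real k > 0" by linarith
    then show "k > 0" by simp
  qed
  have ed: "0 < p e" "p e < 1" "1 / (1 + b) \<le> m e" "0 < m e" "m e * (l e)\<^sup>2 = C / real k" "0 \<le> l e" "l e \<le> 1/4"
    "1 / m e \<le> 2 * b"
    if e: "e \<in> E" for e
  proof -
    have a: "w (fst e) > 0" and c: "w (snd e) > 0" and ab: "w (snd e) / w (fst e) \<le> b" and ba: "w (fst e) / w (snd e) \<le> b"
      using og_edge[OF og e] wpos wb by auto
    show p0: "0 < p e" "p e < 1" using a c by (auto simp: p_def pe_def divide_less_eq)
    have "p e = 1 / (1 + w (snd e) / w (fst e))" using a c by (simp add: p_def pe_def field_simps)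
    also have "\<dots> \<ge> 1 / (1 + b)"
    proof -
      have x1: "0 < 1 + w (snd e) / w (fst e)" using a c by (simp add: add_pos_pos)
      have x2: "0 < 1 + b" using b1 by simp
      show ?thesis using ab x1 x2 by (intro divide_left_mono) (simp_all add: mult_pos_pos)
    qed
    finally have pb: "p e \<ge> 1 / (1 + b)" .
    have "1 - p e = 1 / (1 + w (fst e) / w (snd e))" using a c by (simp add: p_def pe_def field_simps)
    also have "\<dots> \<ge> 1 / (1 + b)"
    proof -
      have x1: "0 < 1 + w (fst e) / w (snd e)" using a c by (simp add: add_pos_pos)
      have x2: "0 < 1 + b" using b1 by simp
      show ?thesis using ba x1 x2 by (intro divide_left_mono) (simp_all add: mult_pos_pos)
    qed
    finally have qb: "1 - p e \<ge> 1 / (1 + b)" .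
    show mb: "1 / (1 + b) \<le> m e" using pb qb by (simp add: m_def)
    have bpos: "0 < 1 / (1 + b)" using b1 by simp
    show m0: "0 < m e" using mb bpos by linarith
    have "1 / m e \<le> 1 / (1 / (1 + b))" using mb bpos m0 by (intro divide_left_mono) (simp_all add: mult_pos_pos)
    also have "\<dots> = 1 + b" by simp
    also have "\<dots> \<le> 2 * b" using b1 by simp
    finally show mi: "1 / m e \<le> 2 * b" .
    have kp: "real k > 0" using kC[OF e] by simp
    have Cm: "0 \<le> C / (m e * real k)" using C4 m0 kp by simp
    show "m e * (l e)\<^sup>2 = C / real k" using Cm m0 kp by (simp add: l_def)
    show "0 \<le> l e" using Cm by (simp add: l_def)
    have "C / (m e * real k) = (1 / m e) * (C / real k)" by simp
    also have "\<dots> \<le> (2 * b) * (C / real k)" using mi C4 kp by (intro mult_right_mono) auto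
    also have "\<dots> \<le> 1 / 16"
    proof -
      have "32 * b * C \<le> real k" using kC[OF e] by simp
      then show ?thesis using kp by (simp add: field_simps)
    qed
    finally have "C / (m e * real k) \<le> (1/4)\<^sup>2" by (simp add: power2_eq_square)
    then show "l e \<le> 1/4" unfolding l_def by (metis real_sqrt_le_mono real_sqrt_pow2_iff  abs_of_nonneg real_sqrt_abs zero_le_divide_1_iff zero_le_numeral)
  qed
  have pbad: "measure_pmf.prob ?\<Omega> (bad e) \<le> 2 * exp (- C)" if e: "e \<in> E" for e
  proof -
    note E = ed[OF e]
    have kp: "real k > 0" using kC[OF e] by simp
    have mm: "m e = p e \<or> m e = 1 - p e" by (auto simp: m_def)
    have l1: "l e \<le> 1" using E by linarith
    have ex: "exp (- (real k * (m e * (l e)\<^sup>2))) = exp (- C)" using E(5) kp by simp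
    have u: "measure_pmf.prob ?\<Omega> {X. real (X e) \<ge> real k * (p e + t e)} \<le> exp (- C)"
      using tails(1)[OF E(1,2) mm E(6) l1, of k] ex
        prob_component[OF fin e, of w k "\<lambda>x. real x \<ge> real k * (p e + t e)"]
      by (simp add: p_def t_def)
    have lo: "measure_pmf.prob ?\<Omega> {X. real (X e) \<le> real k * (p e - t e)} \<le> exp (- C)"
      using tails(2)[OF E(1,2) mm E(6) l1, of k] ex
        prob_component[OF fin e, of w k "\<lambda>x. real x \<le> real k * (p e - t e)"]
      by (simp add: p_def t_def)
    have "measure_pmf.prob ?\<Omega> (bad e) \<le> measure_pmf.prob ?\<Omega> {X. real (X e) \<ge> real k * (p e + t e)} + measure_pmf.prob ?\<Omega> {X. real (X e) \<le> real k * (p e - t e)}"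
      unfolding bad_def by (rule measure_subadditive) (auto simp: measure_pmf.emeasure_eq_measure)
    then show ?thesis using u lo by linarith
  qed
  have union: "measure_pmf.prob ?\<Omega> (\<Union>e\<in>E. bad e) \<le> \<delta>"
  proof -
    have "measure_pmf.prob ?\<Omega> (\<Union>e\<in>E. bad e) \<le> (\<Sum>e\<in>E. measure_pmf.prob ?\<Omega> (bad e))"
      using fin by (intro measure_pmf.finite_measure_subadditive_finite) auto
    also have "\<dots> \<le> (\<Sum>e\<in>E. 2 * exp (- C))" by (rule sum_mono) (rule pbad)
    also have "\<dots> = real (card E) * (2 * exp (- C))" by simp
    also have "\<dots> \<le> \<delta>" by (rule num_bound[OF n1 d0 d1 Cb cardE[OF og]])
    finally show ?thesis .
  qed
  have sub: "UNIV - (\<Union>e\<in>E. bad e) \<subseteq> ?T"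
  proof
    fix X assume X: "X \<in> UNIV - (\<Union>e\<in>E. bad e)"
    have good: "0 < Fr k X e \<and> Fr k X e < 1 \<and> \<bar>Delta w k X e\<bar> \<le> 32 * b * C / real k" if e: "e \<in> E" for e
    proof -
      note E = ed[OF e]
      have kp: "real k > 0" using kC[OF e] by simp
      have nb: "real k * (p e - t e) < real (X e)" "real (X e) < real k * (p e + t e)"
        using X e by (auto simp: bad_def)
      have F: "\<bar>Fr k X e - pe w e\<bar> \<le> t e"
      proof -
        have "p e - t e < real (X e) / real k" "real (X e) / real k < p e + t e"
          using nb kp by (simp_all add: field_simps)
        then show ?thesis by (simp add: Fr_def p_def abs_le_iff)
      qed
      have t0: "0 \<le> t e" using E by (simp add: t_def)
      have tm: "t e \<le> m e / 2" using E by (simp add: t_def)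
      have a: "w (fst e) > 0" and c: "w (snd e) > 0" using og_edge[OF og e] wpos by auto
      note D = edge_delta[OF a c m_def[of e, unfolded p_def] t0 tm F]
      have l2: "(l e)\<^sup>2 = C / (real k * m e)" using E(4) E(5) kp by (simp add: field_simps)
      have "4 * (t e)\<^sup>2 / (m e)\<^sup>2 = 16 * (l e)\<^sup>2"
        using E(4) by (simp add: t_def power_mult_distrib)
      also have "\<dots> = 16 * (C / real k) * (1 / m e)" by (simp add: l2)
      also have "\<dots> \<le> 16 * (C / real k) * (2 * b)"
        using E(8) C4 kp by (intro mult_left_mono) auto
      also have "\<dots> = 32 * b * C / real k" by simp
      finally show ?thesis using D by linarith
    qed
    have ineq: "\<forall>i\<in>verts n. \<forall>j\<in>verts n.
               (log_What n E (\<lambda>e. ln (Rr k X e)) i - log_What n E (\<lambda>e. ln (Rr k X e)) j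
                  - ln (w i / w j))\<^sup>2
               \<le> 2 * sqnorm_ij n E i j (VFp w k X) + 2 * sqnorm_ij n E i j (Delta w k X)"
      using det_part[OF og cg n1 wpos] by blast
    show "X \<in> ?T" using good ineq by blast
  qed
  have "1 - \<delta> \<le> 1 - measure_pmf.prob ?\<Omega> (\<Union>e\<in>E. bad e)" using union by simp
  also have "\<dots> = measure_pmf.prob ?\<Omega> (UNIV - (\<Union>e\<in>E. bad e))"
    using measure_pmf.prob_compl[of "\<Union>e\<in>E. bad e" ?\<Omega>] by simp
  also have "\<dots> \<le> measure_pmf.prob ?\<Omega> ?T"
    using sub by (intro measure_pmf.finite_measure_mono) auto
  finally show ?thesis .
qed


theorem lemma3:
  shows "\<exists>c1 c2 C0 :: real. c1 > 0 \<and> c2 > 0 \<and> C0 > 0 \<and>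
    (\<forall>(n::nat) (E::(nat \<times> nat) set) (w::nat \<Rightarrow> real) (b::real) (\<delta>::real) (C::real) (k::nat).
      n \<ge> 1 \<longrightarrow> oriented_graph n E \<longrightarrow> connected_graph n E \<longrightarrow>
      (\<forall>i\<in>verts n. w i > 0) \<longrightarrow>
      (\<forall>i\<in>verts n. \<forall>j\<in>verts n. w i / w j \<le> b) \<longrightarrow>
      (\<Sum>i\<in>verts n. ln (w i)) = 0 \<longrightarrow>
      0 < \<delta> \<longrightarrow> \<delta> \<le> exp (-1) \<longrightarrow>
      C \<ge> c1 * ln (real n / \<delta>) \<longrightarrow>
      real k \<ge> c2 * b * (C + 1) * max (Omega_max n E) (real (E_max n E)) \<longrightarrow>
      measure_pmf.prob (outcomes E w k)
        {X. (\<forall>e\<in>E. 0 < Fr k X e \<and> Fr k X e < 1) \<and>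
            (\<forall>i\<in>verts n. \<forall>j\<in>verts n.
               (log_What n E (\<lambda>e. ln (Rr k X e)) i - log_What n E (\<lambda>e. ln (Rr k X e)) j
                  - ln (w i / w j))\<^sup>2
               \<le> 2 * sqnorm_ij n E i j (VFp w k X) + 2 * sqnorm_ij n E i j (Delta w k X)) \<and>
            (\<forall>e\<in>E. \<bar>Delta w k X e\<bar> \<le> C0 * b * C / real k)}
      \<ge> 1 - \<delta>)"
  apply (rule exI[of _ "4::real"])
  apply (rule exI[of _ "32::real"])
  apply (rule exI[of _ "32::real"])
  apply (intro conjI allI impI)
     apply simp
    apply simp
   apply simp
  apply (rule main_lemma)
          apply assumption+
  done

end
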